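(* Let $\mathcal{C}\subset\mathbb{R}^N$ be a convex set, $p\in\mathcal{C}$ and $u\in\mathbb{R}^N$. Then the map $r\mapsto\|u\|_{\mathcal{C}}(p;r)$, $r>0$, is non-increasing, and $\limsup_{r\searrow0}\|u\|_{\mathcal{C}}(p;r)\le\|u\|$.
   Context: Local norm: for $p\in\mathcal{C}$, a vector $u$ and $r>0$, $\|u\|_{\mathcal{C}}(p;r)=\sup_{v\in\mathcal{C},\,\|v-p\|=r}\max\big(\langle u,v-p\rangle/r,\,0\big)$ if there exists $v\in\mathcal{C}$ with $\|v-p\|=r$, and $0$ otherwise. $\|\cdot\|$ is the Euclidean norm. *)

theory Defs
  imports "HOL-Analysis.Analysis"
begin

definition local_norm :: "'a::euclidean_space set \<Rightarrow> 'a \<Rightarrow> 'a \<Rightarrow> real \<Rightarrow> real" where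
  "local_norm C u p r =
     (if \<exists>v\<in>C. norm (v - p) = r
      then (SUP v\<in>{v\<in>C. norm (v - p) = r}. max (inner u (v - p) / r) 0)
      else 0)"

end

theory Submission
  imports Defs
begin

lemma term_le:
  fixes u v p :: "'a::euclidean_space"
  assumes "norm (v - p) = r"
  shows "max (inner u (v - p) / r) 0 \<le> norm u"
proof (cases "r = 0")
  case True then show ?thesis by simp
next
  case False
  then have r: "r > 0" using assms norm_ge_zero by (metis less_eq_real_def)
  have "inner u (v - p) \<le> norm u * r" using Cauchy_Schwarz_ineq2[of u "v-p"] assms by simp
  then have "inner u (v - p) / r \<le> norm u" using r by (simp add: divide_le_eq)
  then show ?thesis by simp
qed

lemma bdd: fixes u p :: "'a::euclidean_space" shows "bdd_above ((\<lambda>v. max (inner u (v - p) / r) 0) ` {v\<in>C. norm (v - p) = r})"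
proof (rule bdd_aboveI[where M="norm u"])
  fix x assume "x \<in> (\<lambda>v. max (inner u (v - p) / r) 0) ` {v\<in>C. norm (v - p) = r}"
  then obtain v where "norm (v - p) = r" "x = max (inner u (v - p) / r) 0" by blast
  then show "x \<le> norm u" using term_le[of v p r u] by simp
qed

lemma ln_le: fixes u p :: "'a::euclidean_space" shows "local_norm C u p r \<le> norm u"
proof -
  have "(SUP v\<in>{v\<in>C. norm (v - p) = r}. max (inner u (v - p) / r) 0) \<le> norm u"
    if "\<exists>v\<in>C. norm (v - p) = r"
  proof (rule cSUP_least)
    show "{v\<in>C. norm (v - p) = r} \<noteq> {}" using that by blast
  next
    fix v assume "v \<in> {v\<in>C. norm (v - p) = r}"
    then show "max (inner u (v - p) / r) 0 \<le> norm u" using term_le[of v p r u] by blast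
  qed
  then show ?thesis unfolding local_norm_def by simp
qed

lemma ln_ge: "local_norm C u p r \<ge> 0"
proof (cases "\<exists>v\<in>C. norm (v - p) = r")
  case True
  then obtain v where v: "v \<in> C" "norm (v - p) = r" by blast
  have "0 \<le> max (inner u (v - p) / r) 0" by simp
  also have "\<dots> \<le> (SUP v\<in>{v\<in>C. norm (v - p) = r}. max (inner u (v - p) / r) 0)"
    by (rule cSUP_upper[OF _ bdd]) (use v in auto)
  finally show ?thesis using True unfolding local_norm_def by simp
qed (simp add: local_norm_def)

theorem lemma2p4:
  fixes C :: "'a::euclidean_space set" and p u :: 'a
  assumes "convex C" and "p \<in> C"
  shows "(\<forall>r s. 0 < r \<longrightarrow> r \<le> s \<longrightarrow> local_norm C u p s \<le> local_norm C u p r)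
         \<and> Limsup (at_right 0) (\<lambda>r. ereal (local_norm C u p r)) \<le> ereal (norm u)"
proof
  show "\<forall>r s. 0 < r \<longrightarrow> r \<le> s \<longrightarrow> local_norm C u p s \<le> local_norm C u p r"
  proof (intro allI impI)
    fix r s :: real
    assume r: "0 < r" and rs: "r \<le> s"
    show "local_norm C u p s \<le> local_norm C u p r"
    proof (cases "\<exists>v\<in>C. norm (v - p) = s")
      case False
      then show ?thesis using ln_ge[of C u p r] unfolding local_norm_def by simp
    next
      case True
      have s: "s > 0" using r rs by simp
      have key: "\<exists>w\<in>C. norm (w - p) = r \<and> inner u (w - p) / r = inner u (v - p) / s"
        if v: "v \<in> C" "norm (v - p) = s" for v
      proof -
        define w where "w = p + (r/s) *\<^sub>R (v - p)"
        have "w = (1 - r/s) *\<^sub>R p + (r/s) *\<^sub>R v" unfolding w_def by (simp add: algebra_simps)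
        moreover have "0 \<le> r/s" "r/s \<le> 1" using r s rs by auto
        ultimately have "w \<in> C" using convexD_alt[OF assms(1) assms(2) v(1)] by (metis add.commute)
        moreover have "norm (w - p) = r" using v r s unfolding w_def by simp
        moreover have "inner u (w - p) / r = inner u (v - p) / s"
          unfolding w_def using r s by (simp add: inner_scaleR_right)
        ultimately show ?thesis by blast
      qed
      obtain v0 where "v0 \<in> C" "norm (v0 - p) = s" using True by blast
      then have Ex: "\<exists>w\<in>C. norm (w - p) = r" using key by blast
      have "(SUP v\<in>{v\<in>C. norm (v - p) = s}. max (inner u (v - p) / s) 0)
            \<le> (SUP v\<in>{v\<in>C. norm (v - p) = r}. max (inner u (v - p) / r) 0)"
      proof (rule cSUP_least)
        show "{v\<in>C. norm (v - p) = s} \<noteq> {}" using True by blast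
      next
        fix v assume "v \<in> {v\<in>C. norm (v - p) = s}"
        then obtain w where w: "w \<in> C" "norm (w - p) = r" "inner u (w - p) / r = inner u (v - p) / s"
          using key by blast
        have "max (inner u (v - p) / s) 0 = max (inner u (w - p) / r) 0" using w by simp
        also have "\<dots> \<le> (SUP v\<in>{v\<in>C. norm (v - p) = r}. max (inner u (v - p) / r) 0)"
          by (rule cSUP_upper[OF _ bdd]) (use w in auto)
        finally show "max (inner u (v - p) / s) 0 \<le> \<dots>" .
      qed
      then show ?thesis using True Ex unfolding local_norm_def by simp
    qed
  qed
next
  show "Limsup (at_right 0) (\<lambda>r. ereal (local_norm C u p r)) \<le> ereal (norm u)"
    by (rule Limsup_bounded) (simp add: ln_le)
qed

end
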